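(* Suppose that $\Lambda$ is a row-finite $k$-graph with no sources. If there exists a vector $\xi \in \mathbb{R}^{\Lambda^0}_{>0}$ which is an eigenvector for each adjacency matrix $A_i$ of $\Lambda$, with eigenvalue $\beta_i$, then the formula $\mu(Z(\lambda)) := \beta^{-d(\lambda)} \xi_{s(\lambda)}$ ($\lambda\in\Lambda$) defines a measure on the Borel $\sigma$-algebra of $\Lambda^\infty$.
   Context: A $k$-graph is a countable small category $\Lambda$ with a functor $d:\Lambda\to\mathbb{N}^k$ with unique factorization; vertices $\Lambda^0$, range/source $r,s$; $v\Lambda^n w$ the paths of degree $n$ with range $v$ and source $w$; row-finite/no sources: $v\Lambda^n$ finite/nonempty. The adjacency matrices are $A_i(v,w)=|v\Lambda^{e_i}w|$, $1\le i\le k$. For $n\in\mathbb{Z}^k$, $\beta^n=\beta_1^{n_1}\cdots\beta_k^{n_k}$. $\Lambda^\infty$ is the set of infinite paths (degree-preserving functors $\Omega_k\to\Lambda$, where $\Omega_k$ has morphisms $(m,n)$ with $m\le n$ in $\mathbb{N}^k$), $Z(\lambda)$ the cylinder set of infinite paths beginning with $\lambda$; the cylinder sets generate the topology and the Borel $\sigma$-algebra. *)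

theory Defs
  imports "HOL-Analysis.Analysis"
begin

text \<open>
A k-graph is presented by: a set P of morphisms (paths), range and source maps r s,
a partial composition cmp (cmp l m = l m, meaningful when s l = r m), and a degree
map d into N^k, where N^k is represented as 'k => nat for a finite nonempty index
type 'k (so k = CARD('k)), ordered pointwise.  Objects are identified with their
identity morphisms, as usual for k-graphs.
\<close>

definition kgraph ::
  "'p set \<Rightarrow> ('p \<Rightarrow> 'p) \<Rightarrow> ('p \<Rightarrow> 'p) \<Rightarrow> ('p \<Rightarrow> 'p \<Rightarrow> 'p)
     \<Rightarrow> ('p \<Rightarrow> ('k::finite \<Rightarrow> nat)) \<Rightarrow> bool" where
  "kgraph P r s cmp d \<longleftrightarrow>
     countable P \<and>
     \<comment> \<open>small category (objects = identity morphisms)\<close>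
     (\<forall>l\<in>P. r l \<in> P \<and> s l \<in> P \<and>
        r (r l) = r l \<and> s (r l) = r l \<and> r (s l) = s l \<and> s (s l) = s l) \<and>
     (\<forall>l\<in>P. cmp (r l) l = l \<and> cmp l (s l) = l) \<and>
     (\<forall>l\<in>P. \<forall>m\<in>P. s l = r m \<longrightarrow>
        cmp l m \<in> P \<and> r (cmp l m) = r l \<and> s (cmp l m) = s m) \<and>
     (\<forall>l\<in>P. \<forall>m\<in>P. \<forall>n\<in>P. s l = r m \<and> s m = r n \<longrightarrow>
        cmp (cmp l m) n = cmp l (cmp m n)) \<and>
     \<comment> \<open>degree functor into N^k\<close>
     (\<forall>l\<in>P. d (r l) = (\<lambda>_. 0)) \<and>
     (\<forall>l\<in>P. \<forall>m\<in>P. s l = r m \<longrightarrow> d (cmp l m) = (\<lambda>i. d l i + d m i)) \<and>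
     \<comment> \<open>unique factorisation\<close>
     (\<forall>l\<in>P. \<forall>m n. d l = (\<lambda>i. m i + n i) \<longrightarrow>
        (\<exists>!(a, b). a \<in> P \<and> b \<in> P \<and> s a = r b \<and> d a = m \<and> d b = n \<and> l = cmp a b))"

definition vertices :: "'p set \<Rightarrow> ('p \<Rightarrow> 'p) \<Rightarrow> 'p set" where
  "vertices P r = {v \<in> P. r v = v}"

definition paths_between ::
  "'p set \<Rightarrow> ('p \<Rightarrow> 'p) \<Rightarrow> ('p \<Rightarrow> 'p) \<Rightarrow> ('p \<Rightarrow> ('k \<Rightarrow> nat))
     \<Rightarrow> 'p \<Rightarrow> ('k \<Rightarrow> nat) \<Rightarrow> 'p \<Rightarrow> 'p set" where
  "paths_between P r s d v n w = {l \<in> P. d l = n \<and> r l = v \<and> s l = w}"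

definition paths_from ::
  "'p set \<Rightarrow> ('p \<Rightarrow> 'p) \<Rightarrow> ('p \<Rightarrow> ('k \<Rightarrow> nat)) \<Rightarrow> 'p \<Rightarrow> ('k \<Rightarrow> nat) \<Rightarrow> 'p set" where
  "paths_from P r d v n = {l \<in> P. d l = n \<and> r l = v}"

definition row_finite ::
  "'p set \<Rightarrow> ('p \<Rightarrow> 'p) \<Rightarrow> ('p \<Rightarrow> ('k \<Rightarrow> nat)) \<Rightarrow> bool" where
  "row_finite P r d \<longleftrightarrow> (\<forall>v\<in>vertices P r. \<forall>n. finite (paths_from P r d v n))"

definition no_sources ::
  "'p set \<Rightarrow> ('p \<Rightarrow> 'p) \<Rightarrow> ('p \<Rightarrow> ('k \<Rightarrow> nat)) \<Rightarrow> bool" where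
  "no_sources P r d \<longleftrightarrow> (\<forall>v\<in>vertices P r. \<forall>n. paths_from P r d v n \<noteq> {})"

definition unit_deg :: "'k \<Rightarrow> ('k \<Rightarrow> nat)" where
  "unit_deg i = (\<lambda>j. if j = i then 1 else 0)"

definition adj ::
  "'p set \<Rightarrow> ('p \<Rightarrow> 'p) \<Rightarrow> ('p \<Rightarrow> 'p) \<Rightarrow> ('p \<Rightarrow> ('k \<Rightarrow> nat))
     \<Rightarrow> 'k \<Rightarrow> 'p \<Rightarrow> 'p \<Rightarrow> nat" where
  "adj P r s d i v w = card (paths_between P r s d v (unit_deg i) w)"

text \<open>Infinite paths: degree-preserving functors Omega_k -> Lambda.  A functor x is
recorded by its action on morphisms (m,n), m <= n, of Omega_k; it is set to
undefined off the morphisms of Omega_k so that it is determined by its action.\<close>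
definition inf_paths ::
  "'p set \<Rightarrow> ('p \<Rightarrow> 'p) \<Rightarrow> ('p \<Rightarrow> 'p) \<Rightarrow> ('p \<Rightarrow> 'p \<Rightarrow> 'p) \<Rightarrow> ('p \<Rightarrow> ('k \<Rightarrow> nat))
     \<Rightarrow> ((('k \<Rightarrow> nat) \<times> ('k \<Rightarrow> nat)) \<Rightarrow> 'p) set" where
  "inf_paths P r s cmp d =
     {x. (\<forall>m n. m \<le> n \<longrightarrow> x (m, n) \<in> P \<and> d (x (m, n)) = (\<lambda>i. n i - m i)
                         \<and> r (x (m, n)) = x (m, m) \<and> s (x (m, n)) = x (n, n)) \<and>
         (\<forall>m. r (x (m, m)) = x (m, m)) \<and>
         (\<forall>m n p. m \<le> n \<and> n \<le> p \<longrightarrow> cmp (x (m, n)) (x (n, p)) = x (m, p)) \<and>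
         (\<forall>m n. \<not> m \<le> n \<longrightarrow> x (m, n) = undefined)}"

definition cylinder ::
  "'p set \<Rightarrow> ('p \<Rightarrow> 'p) \<Rightarrow> ('p \<Rightarrow> 'p) \<Rightarrow> ('p \<Rightarrow> 'p \<Rightarrow> 'p) \<Rightarrow> ('p \<Rightarrow> ('k \<Rightarrow> nat))
     \<Rightarrow> 'p \<Rightarrow> ((('k \<Rightarrow> nat) \<times> ('k \<Rightarrow> nat)) \<Rightarrow> 'p) set" where
  "cylinder P r s cmp d l = {x \<in> inf_paths P r s cmp d. x ((\<lambda>_. 0), d l) = l}"

definition borel_inf_paths ::
  "'p set \<Rightarrow> ('p \<Rightarrow> 'p) \<Rightarrow> ('p \<Rightarrow> 'p) \<Rightarrow> ('p \<Rightarrow> 'p \<Rightarrow> 'p) \<Rightarrow> ('p \<Rightarrow> ('k \<Rightarrow> nat))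
     \<Rightarrow> ((('k \<Rightarrow> nat) \<times> ('k \<Rightarrow> nat)) \<Rightarrow> 'p) set set" where
  "borel_inf_paths P r s cmp d =
     sigma_sets (inf_paths P r s cmp d) (cylinder P r s cmp d ` P)"

end

theory Submission
  imports Defs
begin


locale kg =
  fixes P :: "'p set" and r s :: "'p \<Rightarrow> 'p" and cmp :: "'p \<Rightarrow> 'p \<Rightarrow> 'p"
    and d :: "'p \<Rightarrow> ('k::finite \<Rightarrow> nat)"
  assumes kg: "kgraph P r s cmp d"
begin

lemmas kgs = kg[unfolded kgraph_def]

lemma cntP: "countable P" using kgs[THEN conjunct1] by blast

lemma rs_basic:
  assumes "l \<in> P"
  shows "r l \<in> P" "s l \<in> P" "r (r l) = r l" "s (r l) = r l" "r (s l) = s l" "s (s l) = s l"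
  using kgs[THEN conjunct2, THEN conjunct1] assms by blast+

lemma cmp_id: assumes "l \<in> P" shows "cmp (r l) l = l" "cmp l (s l) = l"
  using kgs[THEN conjunct2, THEN conjunct2, THEN conjunct1] assms by blast+

lemma cmpP: assumes "l \<in> P" "m \<in> P" "s l = r m"
  shows "cmp l m \<in> P" "r (cmp l m) = r l" "s (cmp l m) = s m"
  using kgs[THEN conjunct2, THEN conjunct2, THEN conjunct2, THEN conjunct1] assms by blast+

lemma assoc: assumes "l \<in> P" "m \<in> P" "n \<in> P" "s l = r m" "s m = r n"
  shows "cmp (cmp l m) n = cmp l (cmp m n)"
  using kgs[THEN conjunct2, THEN conjunct2, THEN conjunct2, THEN conjunct2, THEN conjunct1] assms by blast

lemma d_r: "l \<in> P \<Longrightarrow> d (r l) = (\<lambda>_. 0)"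
  using kgs[THEN conjunct2, THEN conjunct2, THEN conjunct2, THEN conjunct2, THEN conjunct2, THEN conjunct1] by blast

lemma d_s: "l \<in> P \<Longrightarrow> d (s l) = (\<lambda>_. 0)"
  using d_r[of "s l"] rs_basic[of l] by simp

lemma d_cmp: "l \<in> P \<Longrightarrow> m \<in> P \<Longrightarrow> s l = r m \<Longrightarrow> d (cmp l m) = (\<lambda>i. d l i + d m i)"
  using kgs[THEN conjunct2, THEN conjunct2, THEN conjunct2, THEN conjunct2, THEN conjunct2, THEN conjunct2, THEN conjunct1] by blast

lemma ufac: "l \<in> P \<Longrightarrow> d l = (\<lambda>i. m i + n i) \<Longrightarrow>
   (\<exists>!(a, b). a \<in> P \<and> b \<in> P \<and> s a = r b \<and> d a = m \<and> d b = n \<and> l = cmp a b)"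
  using kgs[THEN conjunct2, THEN conjunct2, THEN conjunct2, THEN conjunct2, THEN conjunct2, THEN conjunct2, THEN conjunct2] by blast

definition fac :: "'p \<Rightarrow> ('k \<Rightarrow> nat) \<Rightarrow> 'p \<times> 'p" where
  "fac l m = (THE (a, b). a \<in> P \<and> b \<in> P \<and> s a = r b \<and> d a = m \<and> d b = (\<lambda>i. d l i - m i) \<and> l = cmp a b)"

definition "pre l m = fst (fac l m)"
definition "post l m = snd (fac l m)"

lemma fac_props:
  assumes "l \<in> P" "m \<le> d l"
  shows "pre l m \<in> P" "post l m \<in> P" "s (pre l m) = r (post l m)" "d (pre l m) = m"
    "d (post l m) = (\<lambda>i. d l i - m i)" "l = cmp (pre l m) (post l m)"
proof -
  have "d l = (\<lambda>i. m i + (d l i - m i))" using assms(2) by (auto simp: le_fun_def)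
  from ufac[OF assms(1) this] have
    "\<exists>!(a, b). a \<in> P \<and> b \<in> P \<and> s a = r b \<and> d a = m \<and> d b = (\<lambda>i. d l i - m i) \<and> l = cmp a b" .
  from theI'[OF this] have
    "case fac l m of (a, b) \<Rightarrow> a \<in> P \<and> b \<in> P \<and> s a = r b \<and> d a = m \<and> d b = (\<lambda>i. d l i - m i) \<and> l = cmp a b"
    unfolding fac_def .
  then show "pre l m \<in> P" "post l m \<in> P" "s (pre l m) = r (post l m)" "d (pre l m) = m"
    "d (post l m) = (\<lambda>i. d l i - m i)" "l = cmp (pre l m) (post l m)"
    unfolding pre_def post_def by (auto split: prod.splits)
qed

lemma fac_unique:
  assumes "a \<in> P" "b \<in> P" "s a = r b" "l = cmp a b"
  shows "pre l (d a) = a" "post l (d a) = b"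
proof -
  have lP: "l \<in> P" using cmpP assms by auto
  have dl: "d l = (\<lambda>i. d a i + d b i)" using d_cmp assms by auto
  have le: "d a \<le> d l" using dl by (auto simp: le_fun_def)
  have db: "d b = (\<lambda>i. d l i - d a i)" using dl by auto
  have dl2: "d l = (\<lambda>i. d a i + (d l i - d a i))" using dl by auto
  note U = ufac[OF lP dl2]
  have "fac l (d a) = (a, b)" unfolding fac_def
    by (rule the1_equality[OF U]) (use assms db in auto)
  then have "(pre l (d a), post l (d a)) = (a, b)" unfolding pre_def post_def by simp
  then show "pre l (d a) = a" "post l (d a) = b" by auto
qed


lemma deg0: assumes "l \<in> P" "d l = (\<lambda>_. 0)" shows "r l = l"
proof -
  have U: "\<exists>!(a, b). a \<in> P \<and> b \<in> P \<and> s a = r b \<and> d a = (\<lambda>_. 0) \<and> d b = (\<lambda>_. 0) \<and> l = cmp a b"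
    using ufac[OF assms(1)] assms(2) by simp
  have 1: "case (r l, l) of (a, b) \<Rightarrow> a \<in> P \<and> b \<in> P \<and> s a = r b \<and> d a = (\<lambda>_. 0) \<and> d b = (\<lambda>_. 0) \<and> l = cmp a b"
    using assms rs_basic[OF assms(1)] d_r[OF assms(1)] cmp_id[OF assms(1)] by simp
  have 2: "case (l, s l) of (a, b) \<Rightarrow> a \<in> P \<and> b \<in> P \<and> s a = r b \<and> d a = (\<lambda>_. 0) \<and> d b = (\<lambda>_. 0) \<and> l = cmp a b"
    using assms rs_basic[OF assms(1)] d_s[OF assms(1)] cmp_id[OF assms(1)] by simp
  have "(r l, l) = (l, s l)" using the1_equality[OF U 1] the1_equality[OF U 2] by simp
  then show ?thesis by simp
qed

lemma pre_full: assumes "l \<in> P" shows "pre l (d l) = l" "post l (d l) = s l"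
  using fac_unique[of l "s l" l] assms rs_basic[OF assms] cmp_id[OF assms] by auto

lemma pre_zero: assumes "l \<in> P" shows "pre l (\<lambda>_. 0) = r l" "post l (\<lambda>_. 0) = l"
  using fac_unique[of "r l" l l] assms rs_basic[OF assms] cmp_id[OF assms] d_r[OF assms] by auto

lemma r_pre: assumes "l \<in> P" "m \<le> d l" shows "r (pre l m) = r l" "s (post l m) = s l"
  using fac_props[OF assms] cmpP[of "pre l m" "post l m"] by metis+

lemma pre_pre: assumes "l \<in> P" "m \<le> n" "n \<le> d l"
  shows "pre (pre l n) m = pre l m" "post l m = cmp (post (pre l n) m) (post l n)"
proof -
  note F = fac_props[OF assms(1) assms(3)]
  define a where "a = pre l n"
  define b where "b = post l n"
  have aP: "a \<in> P" "d a = n" using F a_def by auto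
  have mle: "m \<le> d a" using aP assms by simp
  note G = fac_props[OF aP(1) mle]
  define p where "p = pre a m"
  define q where "q = post a m"
  have "l = cmp (cmp p q) b" using F G a_def b_def p_def q_def by simp
  also have "\<dots> = cmp p (cmp q b)"
    using assoc[of p q b] F G a_def b_def p_def q_def r_pre[OF aP(1) mle] by simp
  finally have l: "l = cmp p (cmp q b)" .
  have qb: "cmp q b \<in> P" "r (cmp q b) = r q"
    using cmpP[of q b] F G a_def b_def p_def q_def r_pre[OF aP(1) mle] by auto
  have "pre l (d p) = p" "post l (d p) = cmp q b"
    using fac_unique[OF _ qb(1) _ l] G p_def q_def qb(2) by auto
  moreover have "d p = m" using G p_def by simp
  ultimately show "pre (pre l n) m = pre l m" "post l m = cmp (post (pre l n) m) (post l n)"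
    using a_def b_def p_def q_def by auto
qed

abbreviation "\<Omega> \<equiv> inf_paths P r s cmp d"

lemma ip:
  assumes "x \<in> \<Omega>" "m \<le> n"
  shows "x (m, n) \<in> P" "d (x (m, n)) = (\<lambda>i. n i - m i)" "r (x (m, n)) = x (m, m)"
    "s (x (m, n)) = x (n, n)"
  using assms unfolding inf_paths_def by auto

lemma ip_cmp:
  assumes "x \<in> \<Omega>" "m \<le> n" "n \<le> p"
  shows "cmp (x (m, n)) (x (n, p)) = x (m, p)"
  using assms unfolding inf_paths_def by auto

lemma ip_pre:
  assumes "x \<in> \<Omega>" "m \<le> n"
  shows "pre (x (\<lambda>_. 0, n)) m = x (\<lambda>_. 0, m)" "post (x (\<lambda>_. 0, n)) m = x (m, n)"
proof -
  have z: "(\<lambda>_. 0) \<le> m" by (simp add: le_fun_def)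
  have "d (x (\<lambda>_. 0, m)) = m" using ip(2)[OF assms(1) z] by simp
  moreover have "x (\<lambda>_. 0, n) = cmp (x (\<lambda>_. 0, m)) (x (m, n))"
    using ip_cmp[OF assms(1) z assms(2)] by simp
  ultimately show "pre (x (\<lambda>_. 0, n)) m = x (\<lambda>_. 0, m)" "post (x (\<lambda>_. 0, n)) m = x (m, n)"
    using fac_unique[of "x (\<lambda>_. 0, m)" "x (m, n)" "x (\<lambda>_. 0, n)"] ip[OF assms(1) z] ip[OF assms]
    by auto
qed

lemma coherent_ext:
  assumes lamL: "\<And>n. lam n \<in> P \<and> d (lam n) = (\<lambda>_. n)"
    and coh: "\<And>n. pre (lam (Suc n)) (\<lambda>_. n) = lam n"
  shows "\<exists>x\<in>\<Omega>. \<forall>n. x ((\<lambda>_. 0), (\<lambda>_. n)) = lam n"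
proof -
  have cohg: "pre (lam M) (\<lambda>_. N) = lam N" if "N \<le> M" for N M
    using that
  proof (induction M rule: dec_induct)
    case base
    then show ?case using pre_full(1)[of "lam N"] lamL[of N] by simp
  next
    case (step n)
    have "pre (lam (Suc n)) (\<lambda>_. N) = pre (pre (lam (Suc n)) (\<lambda>_. n)) (\<lambda>_. N)"
      using pre_pre(1)[of "lam (Suc n)" "\<lambda>_. N" "\<lambda>_. n"] lamL[of "Suc n"] step(1)
      by (auto simp: le_fun_def)
    then show ?case using coh step by simp
  qed
  define K :: "('k \<Rightarrow> nat) \<Rightarrow> nat" where "K n = sum n UNIV" for n
  have Kle: "n \<le> (\<lambda>_. K n)" for n
    unfolding K_def le_fun_def by (auto intro: member_le_sum)
  define g where "g n = pre (lam (K n)) n" for n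
  have g_eq: "g n = pre (lam N) n" if "n \<le> (\<lambda>_. N)" for n N
  proof -
    define M where "M = max N (K n)"
    have 1: "pre (lam M) n = pre (lam N) n"
      using pre_pre(1)[of "lam M" n "\<lambda>_. N"] lamL[of M] cohg[of N M] that
      by (auto simp: M_def le_fun_def)
    have 2: "pre (lam M) n = pre (lam (K n)) n"
      using pre_pre(1)[of "lam M" n "\<lambda>_. K n"] lamL[of M] cohg[of "K n" M] Kle[of n]
      by (auto simp: M_def le_fun_def)
    show ?thesis using 1 2 g_def by simp
  qed
  have gP: "g n \<in> P" "d (g n) = n" for n
    using fac_props[of "lam (K n)" n] lamL[of "K n"] Kle[of n] g_def by auto
  have g_pre: "g m = pre (g n) m" if "m \<le> n" for m n
  proof -
    have "g m = pre (lam (K n)) m" using g_eq[of m "K n"] that Kle[of n] order_trans by blast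
    also have "\<dots> = pre (pre (lam (K n)) n) m"
      using pre_pre(1)[of "lam (K n)" m n] lamL[of "K n"] Kle[of n] that by auto
    finally show ?thesis using g_def by simp
  qed
  define x where "x = (\<lambda>(m, n). if m \<le> n then post (g n) m else undefined)"
  have xmn: "x (m, n) = post (g n) m" if "m \<le> n" for m n using that x_def by simp
  have xmm: "x (m, m) = s (g m)" for m using xmn[of m m] pre_full(2)[of "g m"] gP[of m] by simp
  have "x \<in> \<Omega>"
    unfolding inf_paths_def
  proof (intro CollectI conjI allI impI)
    fix m n :: "'k \<Rightarrow> nat" assume mn: "m \<le> n"
    have le: "m \<le> d (g n)" using gP mn by simp
    show "x (m, n) \<in> P" using fac_props(2)[OF gP(1) le] xmn[OF mn] by simp
    show "d (x (m, n)) = (\<lambda>i. n i - m i)" using fac_props(5)[OF gP(1) le] xmn[OF mn] gP by simp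
    show "r (x (m, n)) = x (m, m)"
      using fac_props(3)[OF gP(1) le] xmn[OF mn] xmm[of m] g_pre[OF mn] by simp
    show "s (x (m, n)) = x (n, n)"
      using r_pre(2)[OF gP(1) le] xmn[OF mn] xmm[of n] by simp
  next
    fix m :: "'k \<Rightarrow> nat"
    show "r (x (m, m)) = x (m, m)" using xmm[of m] rs_basic[OF gP(1)[of m]] by simp
  next
    fix m n p :: "'k \<Rightarrow> nat" assume mnp: "m \<le> n \<and> n \<le> p"
    have "post (g p) m = cmp (post (pre (g p) n) m) (post (g p) n)"
      using pre_pre(2)[of "g p" m n] gP[of p] mnp by auto
    then show "cmp (x (m, n)) (x (n, p)) = x (m, p)"
      using xmn mnp g_pre[of n p] order_trans by metis
  next
    fix m n :: "'k \<Rightarrow> nat" assume "\<not> m \<le> n"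
    then show "x (m, n) = undefined" using x_def by simp
  qed
  moreover have "x ((\<lambda>_. 0), (\<lambda>_. n)) = lam n" for n
  proof -
    have "x ((\<lambda>_. 0), (\<lambda>_. n)) = post (g (\<lambda>_. n)) (\<lambda>_. 0)" using xmn by (simp add: le_fun_def)
    also have "\<dots> = g (\<lambda>_. n)" using pre_zero(2) gP by simp
    also have "\<dots> = pre (lam n) (\<lambda>_. n)" using g_eq[of "\<lambda>_. n" n] by simp
    also have "\<dots> = lam n" using pre_full(1)[of "lam n"] lamL[of n] by simp
    finally show ?thesis .
  qed
  ultimately show ?thesis by blast
qed

end



locale kgm = kg P r s cmp d
  for P :: "'p set" and r s :: "'p \<Rightarrow> 'p" and cmp :: "'p \<Rightarrow> 'p \<Rightarrow> 'p"
    and d :: "'p \<Rightarrow> ('k::finite \<Rightarrow> nat)" +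
  fixes \<xi> :: "'p \<Rightarrow> real" and \<beta> :: "'k \<Rightarrow> real"
  assumes rf: "row_finite P r d"
    and ns: "no_sources P r d"
    and xipos: "\<forall>v\<in>vertices P r. \<xi> v > 0"
    and eig: "\<forall>i. \<forall>v\<in>vertices P r.
           (\<Sum>\<^sub>\<infinity>w\<in>vertices P r. real (adj P r s d i v w) * \<xi> w) = \<beta> i * \<xi> v"
begin

lemma vert: "l \<in> P \<Longrightarrow> r l \<in> vertices P r" "l \<in> P \<Longrightarrow> s l \<in> vertices P r"
  using rs_basic[of l] unfolding vertices_def by auto

lemma pf_fin: "v \<in> vertices P r \<Longrightarrow> finite (paths_from P r d v n)"
  using rf unfolding row_finite_def by blast

lemma pf_ne: "v \<in> vertices P r \<Longrightarrow> paths_from P r d v n \<noteq> {}"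
  using ns unfolding no_sources_def by blast

lemma pf_split:
  "paths_from P r d v (\<lambda>i. m i + n i) =
     (\<lambda>(a, b). cmp a b) ` (SIGMA a:paths_from P r d v m. paths_from P r d (s a) n)"
  "inj_on (\<lambda>(a, b). cmp a b) (SIGMA a:paths_from P r d v m. paths_from P r d (s a) n)"
proof -
  show "paths_from P r d v (\<lambda>i. m i + n i) =
     (\<lambda>(a, b). cmp a b) ` (SIGMA a:paths_from P r d v m. paths_from P r d (s a) n)"
  proof (intro equalityI subsetI)
    fix t assume t: "t \<in> paths_from P r d v (\<lambda>i. m i + n i)"
    then have tP: "t \<in> P" and dt: "d t = (\<lambda>i. m i + n i)" and rt: "r t = v"
      unfolding paths_from_def by auto
    have le: "m \<le> d t" using dt by (auto simp: le_fun_def)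
    note F = fac_props[OF tP le]
    have "pre t m \<in> paths_from P r d v m" using F r_pre[OF tP le] rt unfolding paths_from_def by auto
    moreover have "post t m \<in> paths_from P r d (s (pre t m)) n"
      using F dt unfolding paths_from_def by auto
    ultimately show "t \<in> (\<lambda>(a, b). cmp a b) ` (SIGMA a:paths_from P r d v m. paths_from P r d (s a) n)"
      using F(6) by (intro image_eqI[of _ _ "(pre t m, post t m)"]) auto
  next
    fix t assume "t \<in> (\<lambda>(a, b). cmp a b) ` (SIGMA a:paths_from P r d v m. paths_from P r d (s a) n)"
    then obtain a b where ab: "a \<in> paths_from P r d v m" "b \<in> paths_from P r d (s a) n" "t = cmp a b"
      by auto
    then show "t \<in> paths_from P r d v (\<lambda>i. m i + n i)"
      using cmpP[of a b] d_cmp[of a b] unfolding paths_from_def by auto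
  qed
  show "inj_on (\<lambda>(a, b). cmp a b) (SIGMA a:paths_from P r d v m. paths_from P r d (s a) n)"
  proof (rule inj_onI, clarsimp)
    fix a b a' b'
    assume "a \<in> paths_from P r d v m" "b \<in> paths_from P r d (s a) n"
       "a' \<in> paths_from P r d v m" "b' \<in> paths_from P r d (s a') n" "cmp a b = cmp a' b'"
    then show "a = a' \<and> b = b'"
      using fac_unique[of a b "cmp a b"] fac_unique[of a' b' "cmp a b"]
      unfolding paths_from_def by auto
  qed
qed

lemma eig1:
  assumes u: "u \<in> vertices P r"
  shows "(\<Sum>b\<in>paths_from P r d u (unit_deg i). \<xi> (s b)) = \<beta> i * \<xi> u"
proof -
  let ?F = "paths_from P r d u (unit_deg i)"
  have fin: "finite ?F" using pf_fin[OF u] .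
  have "(\<Sum>b\<in>?F. \<xi> (s b)) = (\<Sum>w\<in>s ` ?F. \<Sum>b\<in>{b\<in>?F. s b = w}. \<xi> (s b))"
    using sum.image_gen[OF fin] by blast
  also have "\<dots> = (\<Sum>w\<in>s ` ?F. real (adj P r s d i u w) * \<xi> w)"
  proof (rule sum.cong[OF refl])
    fix w assume "w \<in> s ` ?F"
    have "{b\<in>?F. s b = w} = paths_between P r s d u (unit_deg i) w"
      unfolding paths_between_def paths_from_def by auto
    moreover have "(\<Sum>b\<in>{b\<in>?F. s b = w}. \<xi> (s b)) = (\<Sum>b\<in>{b\<in>?F. s b = w}. \<xi> w)"
      by (rule sum.cong) auto
    ultimately show "(\<Sum>b\<in>{b\<in>?F. s b = w}. \<xi> (s b)) = real (adj P r s d i u w) * \<xi> w"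
      unfolding adj_def by simp
  qed
  also have "\<dots> = (\<Sum>\<^sub>\<infinity>w\<in>vertices P r. real (adj P r s d i u w) * \<xi> w)"
  proof -
    have "(\<Sum>\<^sub>\<infinity>w\<in>vertices P r. real (adj P r s d i u w) * \<xi> w)
        = (\<Sum>\<^sub>\<infinity>w\<in>s ` ?F. real (adj P r s d i u w) * \<xi> w)"
    proof (rule infsum_cong_neutral)
      fix w assume w: "w \<in> vertices P r - s ` ?F"
      have "paths_between P r s d u (unit_deg i) w = {}"
        using w unfolding paths_between_def paths_from_def by auto
      then show "real (adj P r s d i u w) * \<xi> w = 0" unfolding adj_def by simp
    next
      fix w assume w: "w \<in> s ` ?F - vertices P r"
      then show "real (adj P r s d i u w) * \<xi> w = 0"
        using vert(2) unfolding paths_from_def by auto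
    qed simp
    then show ?thesis using fin by simp
  qed
  also have "\<dots> = \<beta> i * \<xi> u" using eig u by blast
  finally show ?thesis .
qed

lemma beta_pos:
  assumes u: "u \<in> vertices P r" shows "\<beta> i > 0"
proof -
  let ?F = "paths_from P r d u (unit_deg i)"
  have "(\<Sum>b\<in>?F. \<xi> (s b)) > 0"
  proof (rule sum_pos)
    show "finite ?F" using pf_fin[OF u] .
    show "?F \<noteq> {}" using pf_ne[OF u] .
    fix b assume "b \<in> ?F" then show "\<xi> (s b) > 0"
      using xipos vert(2)[of b] unfolding paths_from_def by auto
  qed
  then have "\<beta> i * \<xi> u > 0" using eig1[OF u] by simp
  moreover have "\<xi> u > 0" using xipos u by auto
  ultimately show ?thesis by (simp add: zero_less_mult_iff)
qed


lemma pf_zero: assumes v: "v \<in> vertices P r" shows "paths_from P r d v (\<lambda>_. 0) = {v}"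
proof -
  have vP: "v \<in> P" "r v = v" using v unfolding vertices_def by auto
  have "d v = (\<lambda>_. 0)" using d_r[OF vP(1)] vP(2) by simp
  moreover have "l = v" if "l \<in> P" "d l = (\<lambda>_. 0)" "r l = v" for l
    using deg0[OF that(1,2)] that(3) by simp
  ultimately show ?thesis using vP unfolding paths_from_def by auto
qed

lemma sumlem:
  assumes v: "v \<in> vertices P r"
  shows "(\<Sum>\<mu>\<in>paths_from P r d v n. \<xi> (s \<mu>)) = (\<Prod>i\<in>UNIV. \<beta> i ^ n i) * \<xi> v"
proof -
  have "\<forall>n v. sum n UNIV = k \<longrightarrow> v \<in> vertices P r \<longrightarrow>
     (\<Sum>\<mu>\<in>paths_from P r d v n. \<xi> (s \<mu>)) = (\<Prod>i\<in>UNIV. \<beta> i ^ n i) * \<xi> v" for k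
  proof (induction k)
    case 0
    show ?case
    proof (intro allI impI)
      fix n :: "'k \<Rightarrow> nat" and v assume n: "sum n UNIV = 0" and v: "v \<in> vertices P r"
      have n0: "n = (\<lambda>_. 0)" using n by (auto simp: sum_eq_0_iff)
      have "s v = v" using v rs_basic[of v] unfolding vertices_def by auto
      then show "(\<Sum>\<mu>\<in>paths_from P r d v n. \<xi> (s \<mu>)) = (\<Prod>i\<in>UNIV. \<beta> i ^ n i) * \<xi> v"
        using pf_zero[OF v] n0 by simp
    qed
  next
    case (Suc k)
    show ?case
    proof (intro allI impI)
      fix n :: "'k \<Rightarrow> nat" and v assume n: "sum n UNIV = Suc k" and v: "v \<in> vertices P r"
      obtain i where i: "n i > 0" using n by (metis gr0I sum.neutral_const sum.not_neutral_contains_not_neutral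
            Zero_not_Suc)
      define n' where "n' = n(i := n i - 1)"
      have nn': "n = (\<lambda>j. n' j + unit_deg i j)" using i unfolding n'_def unit_deg_def by auto
      have sn': "sum n' UNIV = k"
      proof -
        have "sum n UNIV = sum n' UNIV + sum (unit_deg i) UNIV"
          by (subst nn') (simp add: sum.distrib)
        moreover have "sum (unit_deg i) UNIV = 1" unfolding unit_deg_def by simp
        ultimately show ?thesis using n by simp
      qed
      let ?S = "SIGMA a:paths_from P r d v n'. paths_from P r d (s a) (unit_deg i)"
      have finS: "finite ?S"
        using pf_fin[OF v] pf_fin vert(2) unfolding paths_from_def by (intro finite_SigmaI) auto
      have "(\<Sum>\<mu>\<in>paths_from P r d v n. \<xi> (s \<mu>))
          = (\<Sum>\<mu>\<in>(\<lambda>(a, b). cmp a b) ` ?S. \<xi> (s \<mu>))"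
        using pf_split(1)[of v n' "unit_deg i"] nn' by simp
      also have "\<dots> = (\<Sum>(a, b)\<in>?S. \<xi> (s (cmp a b)))"
        by (subst sum.reindex[OF pf_split(2)]) (simp add: case_prod_unfold)
      also have "\<dots> = (\<Sum>(a, b)\<in>?S. \<xi> (s b))"
        by (rule sum.cong) (auto simp: paths_from_def cmpP)
      also have "\<dots> = (\<Sum>a\<in>paths_from P r d v n'. \<Sum>b\<in>paths_from P r d (s a) (unit_deg i). \<xi> (s b))"
        using pf_fin[OF v] pf_fin vert(2) unfolding paths_from_def
        by (subst sum.Sigma) auto
      also have "\<dots> = (\<Sum>a\<in>paths_from P r d v n'. \<beta> i * \<xi> (s a))"
        by (rule sum.cong[OF refl], rule eig1) (use vert(2) in \<open>auto simp: paths_from_def\<close>)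
      also have "\<dots> = \<beta> i * (\<Sum>a\<in>paths_from P r d v n'. \<xi> (s a))"
        by (simp add: sum_distrib_left)
      also have "\<dots> = \<beta> i * ((\<Prod>j\<in>UNIV. \<beta> j ^ n' j) * \<xi> v)"
        using Suc.IH sn' v by simp
      also have "\<dots> = (\<Prod>j\<in>UNIV. \<beta> j ^ n j) * \<xi> v"
      proof -
        have "(\<Prod>j\<in>UNIV. \<beta> j ^ n j) = (\<Prod>j\<in>UNIV. \<beta> j ^ n' j * \<beta> j ^ unit_deg i j)"
          by (subst nn') (simp add: power_add)
        also have "\<dots> = (\<Prod>j\<in>UNIV. \<beta> j ^ n' j) * (\<Prod>j\<in>UNIV. \<beta> j ^ unit_deg i j)"
          by (rule prod.distrib)
        also have "(\<Prod>j\<in>UNIV. \<beta> j ^ unit_deg i j) = (\<Prod>j\<in>UNIV. if j = i then \<beta> j else 1)"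
          unfolding unit_deg_def by (rule prod.cong) auto
        also have "\<dots> = \<beta> i" by (simp add: prod.delta)
        finally show ?thesis by simp
      qed
      finally show "(\<Sum>\<mu>\<in>paths_from P r d v n. \<xi> (s \<mu>)) = (\<Prod>i\<in>UNIV. \<beta> i ^ n i) * \<xi> v" .
    qed
  qed
  then show ?thesis using v by blast
qed

definition w :: "'p \<Rightarrow> real" where
  "w l = (\<Prod>i\<in>UNIV. inverse (\<beta> i) ^ d l i) * \<xi> (s l)"

lemma w_nonneg: "l \<in> P \<Longrightarrow> w l \<ge> 0"
  unfolding w_def using beta_pos[OF vert(1)] xipos vert(2)
  by (intro mult_nonneg_nonneg prod_nonneg) (auto intro: less_imp_le)

lemma ext_set:
  assumes lP: "l \<in> P" and le: "d l \<le> n"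
  shows "{t\<in>P. d t = n \<and> pre t (d l) = l} = cmp l ` paths_from P r d (s l) (\<lambda>i. n i - d l i)"
    "inj_on (cmp l) (paths_from P r d (s l) (\<lambda>i. n i - d l i))"
proof -
  show "{t\<in>P. d t = n \<and> pre t (d l) = l} = cmp l ` paths_from P r d (s l) (\<lambda>i. n i - d l i)"
  proof (intro equalityI subsetI)
    fix t assume t: "t \<in> {t\<in>P. d t = n \<and> pre t (d l) = l}"
    then have tP: "t \<in> P" "d t = n" "pre t (d l) = l" by auto
    have le': "d l \<le> d t" using tP le by simp
    note F = fac_props[OF tP(1) le']
    show "t \<in> cmp l ` paths_from P r d (s l) (\<lambda>i. n i - d l i)"
      using F tP unfolding paths_from_def by (intro image_eqI[of _ _ "post t (d l)"]) auto
  next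
    fix t assume "t \<in> cmp l ` paths_from P r d (s l) (\<lambda>i. n i - d l i)"
    then obtain m where m: "m \<in> P" "d m = (\<lambda>i. n i - d l i)" "r m = s l" "t = cmp l m"
      unfolding paths_from_def by auto
    have "d t = n" using d_cmp[OF lP m(1)] m le by (auto simp: le_fun_def)
    then show "t \<in> {t\<in>P. d t = n \<and> pre t (d l) = l}"
      using cmpP[OF lP m(1)] fac_unique[OF lP m(1) _ m(4)] m by auto
  qed
  show "inj_on (cmp l) (paths_from P r d (s l) (\<lambda>i. n i - d l i))"
  proof (rule inj_onI)
    fix x y assume "x \<in> paths_from P r d (s l) (\<lambda>i. n i - d l i)"
      "y \<in> paths_from P r d (s l) (\<lambda>i. n i - d l i)" "cmp l x = cmp l y"
    then have xy: "x \<in> P" "s l = r x" "y \<in> P" "s l = r y" "cmp l x = cmp l y"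
      unfolding paths_from_def by auto
    have "x = post (cmp l x) (d l)" using fac_unique(2)[OF lP xy(1,2) refl] by simp
    also have "\<dots> = post (cmp l y) (d l)" using xy(5) by simp
    also have "\<dots> = y" using fac_unique(2)[OF lP xy(3,4) refl] by simp
    finally show "x = y" .
  qed
qed

lemma ext_sum:
  assumes lP: "l \<in> P" and le: "d l \<le> n"
  shows "(\<Sum>t\<in>{t\<in>P. d t = n \<and> pre t (d l) = l}. w t) = w l"
proof -
  let ?m = "\<lambda>i. n i - d l i"
  have bpos: "\<beta> i > 0" for i using beta_pos[OF vert(1)[OF lP]] .
  have "(\<Sum>t\<in>{t\<in>P. d t = n \<and> pre t (d l) = l}. w t) = (\<Sum>m\<in>paths_from P r d (s l) ?m. w (cmp l m))"
    using ext_set[OF lP le] by (simp add: sum.reindex)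
  also have "\<dots> = (\<Sum>m\<in>paths_from P r d (s l) ?m. (\<Prod>i\<in>UNIV. inverse (\<beta> i) ^ n i) * \<xi> (s m))"
  proof (rule sum.cong[OF refl])
    fix m assume m: "m \<in> paths_from P r d (s l) ?m"
    then have mP: "m \<in> P" "r m = s l" "d m = ?m" unfolding paths_from_def by auto
    have "d (cmp l m) = n" using d_cmp[OF lP mP(1)] mP le by (auto simp: le_fun_def)
    then show "w (cmp l m) = (\<Prod>i\<in>UNIV. inverse (\<beta> i) ^ n i) * \<xi> (s m)"
      unfolding w_def using cmpP[OF lP mP(1)] mP by simp
  qed
  also have "\<dots> = (\<Prod>i\<in>UNIV. inverse (\<beta> i) ^ n i) * (\<Sum>m\<in>paths_from P r d (s l) ?m. \<xi> (s m))"
    by (simp add: sum_distrib_left)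
  also have "\<dots> = (\<Prod>i\<in>UNIV. inverse (\<beta> i) ^ n i) * ((\<Prod>i\<in>UNIV. \<beta> i ^ ?m i) * \<xi> (s l))"
    using sumlem[OF vert(2)[OF lP]] by simp
  also have "\<dots> = w l"
  proof -
    have "(\<Prod>i\<in>UNIV. inverse (\<beta> i) ^ n i) * (\<Prod>i\<in>UNIV. \<beta> i ^ ?m i)
       = (\<Prod>i\<in>UNIV. inverse (\<beta> i) ^ n i * \<beta> i ^ ?m i)"
      by (simp add: prod.distrib)
    also have "\<dots> = (\<Prod>i\<in>UNIV. inverse (\<beta> i) ^ d l i)"
    proof (rule prod.cong[OF refl])
      fix i
      have ni: "n i = d l i + ?m i" using le by (auto simp: le_fun_def)
      have "inverse (\<beta> i) ^ n i * \<beta> i ^ ?m i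
          = inverse (\<beta> i) ^ d l i * (inverse (\<beta> i) * \<beta> i) ^ ?m i"
        by (subst ni) (simp add: power_add power_mult_distrib)
      then show "inverse (\<beta> i) ^ n i * \<beta> i ^ ?m i = inverse (\<beta> i) ^ d l i"
        using bpos[of i] by simp
    qed
    finally show ?thesis unfolding w_def by (simp add: mult.assoc)
  qed
  finally show ?thesis .
qed

end



context kgm begin

abbreviation dg :: "nat \<Rightarrow> 'k \<Rightarrow> nat" where "dg N \<equiv> (\<lambda>_. N)"

definition ext1 :: "'p \<Rightarrow> 'p" where
  "ext1 t = cmp t (SOME m. m \<in> paths_from P r d (s t) (dg 1))"

lemma ext1_props:
  assumes tP: "t \<in> P"
  shows "ext1 t \<in> P" "d (ext1 t) = (\<lambda>i. d t i + 1)" "pre (ext1 t) (d t) = t"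
proof -
  have "\<exists>m. m \<in> paths_from P r d (s t) (dg 1)" using pf_ne[OF vert(2)[OF tP]] by blast
  then have m: "(SOME m. m \<in> paths_from P r d (s t) (dg 1)) \<in> paths_from P r d (s t) (dg 1)"
    by (rule someI_ex)
  define m where "m = (SOME m. m \<in> paths_from P r d (s t) (dg 1))"
  have mP: "m \<in> P" "d m = dg 1" "r m = s t" using m m_def unfolding paths_from_def by auto
  show "ext1 t \<in> P" "d (ext1 t) = (\<lambda>i. d t i + 1)" "pre (ext1 t) (d t) = t"
    unfolding ext1_def m_def[symmetric]
    using cmpP[OF tP mP(1)] d_cmp[OF tP mP(1)] fac_unique(1)[OF tP mP(1) _ refl] mP by auto
qed

lemma path_ext:
  assumes tP: "t \<in> P" and dt: "d t = dg N"
  shows "\<exists>x\<in>\<Omega>. x (dg 0, dg N) = t"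
proof -
  define \<sigma> where "\<sigma> = rec_nat t (\<lambda>_ u. ext1 u)"
  have \<sigma>0: "\<sigma> 0 = t" and \<sigma>S: "\<sigma> (Suc j) = ext1 (\<sigma> j)" for j unfolding \<sigma>_def by simp_all
  have \<sigma>P: "\<sigma> j \<in> P \<and> d (\<sigma> j) = dg (N + j)" for j
    by (induction j) (use \<sigma>0 \<sigma>S tP dt ext1_props in auto)
  have \<sigma>pre: "pre (\<sigma> (Suc j)) (dg (N + j)) = \<sigma> j" for j
    using ext1_props(3)[of "\<sigma> j"] \<sigma>P[of j] \<sigma>S by simp
  have \<sigma>pre2: "pre (\<sigma> (Suc j)) (dg M) = pre (\<sigma> j) (dg M)" if "M \<le> N + j" for j M
    using pre_pre(1)[of "\<sigma> (Suc j)" "dg M" "dg (N + j)"] \<sigma>P[of "Suc j"] that \<sigma>pre[of j]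
    by (auto simp: le_fun_def)
  have \<sigma>t: "pre (\<sigma> j) (dg N) = t" for j
  proof (induction j)
    case 0 then show ?case using \<sigma>0 pre_full(1)[OF tP] dt by simp
  next
    case (Suc j) then show ?case using \<sigma>pre2[of N j] by simp
  qed
  define lam where "lam m = pre (\<sigma> m) (dg m)" for m
  have lamL: "lam m \<in> P \<and> d (lam m) = dg m" for m
    using fac_props(1,4)[of "\<sigma> m" "dg m"] \<sigma>P[of m] unfolding lam_def by (auto simp: le_fun_def)
  have coh: "pre (lam (Suc m)) (dg m) = lam m" for m
  proof -
    have "pre (lam (Suc m)) (dg m) = pre (\<sigma> (Suc m)) (dg m)"
      unfolding lam_def using pre_pre(1)[of "\<sigma> (Suc m)" "dg m" "dg (Suc m)"] \<sigma>P[of "Suc m"]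
      by (auto simp: le_fun_def)
    also have "\<dots> = lam m" unfolding lam_def using \<sigma>pre2[of m m] by simp
    finally show ?thesis .
  qed
  obtain x where x: "x \<in> \<Omega>" "\<forall>n. x (dg 0, dg n) = lam n" using coherent_ext[OF lamL coh] by blast
  have "lam N = t"
  proof -
    have "lam N = pre (\<sigma> N) (dg N)" by (simp add: lam_def)
    then show ?thesis using \<sigma>t by simp
  qed
  then show ?thesis using x by auto
qed

definition L :: "nat \<Rightarrow> 'p set" where "L N = {t\<in>P. d t = dg N}"
definition Cyl :: "nat \<Rightarrow> 'p set \<Rightarrow> _ set" where "Cyl N S = {x\<in>\<Omega>. x (dg 0, dg N) \<in> S}"
definition Rg where "Rg = {Cyl N S | N S. finite S}"
definition up :: "nat \<Rightarrow> nat \<Rightarrow> 'p set \<Rightarrow> 'p set" where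
  "up N K S = {t\<in>L K. pre t (dg N) \<in> S}"

lemma xL: "x \<in> \<Omega> \<Longrightarrow> x (dg 0, dg N) \<in> L N"
  using ip(1,2)[of x "dg 0" "dg N"] unfolding L_def by (auto simp: le_fun_def)

lemma Cyl_up: "N \<le> K \<Longrightarrow> Cyl N S = Cyl K (up N K S)"
  unfolding Cyl_def up_def using xL ip_pre(1)[of _ "dg N" "dg K"]
  by (auto simp: le_fun_def)

lemma Cyl_L: "Cyl N S = Cyl N (S \<inter> L N)"
  unfolding Cyl_def using xL by auto

lemma up_fin: assumes "N \<le> K" "finite S" shows "finite (up N K S)"
proof -
  have "up N K S \<subseteq> (\<Union>\<sigma>\<in>S \<inter> P. paths_from P r d (r \<sigma>) (dg K))"
  proof
    fix t assume t: "t \<in> up N K S"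
    then have tP: "t \<in> P" "d t = dg K" "pre t (dg N) \<in> S" unfolding up_def L_def by auto
    have le: "dg N \<le> d t" using tP assms by (auto simp: le_fun_def)
    show "t \<in> (\<Union>\<sigma>\<in>S \<inter> P. paths_from P r d (r \<sigma>) (dg K))"
      using fac_props(1)[OF tP(1) le] r_pre(1)[OF tP(1) le] tP
      by (intro UN_I[of "pre t (dg N)"]) (auto simp: paths_from_def)
  qed
  moreover have "finite (\<Union>\<sigma>\<in>S \<inter> P. paths_from P r d (r \<sigma>) (dg K))"
    using assms(2) pf_fin vert(1) by auto
  ultimately show ?thesis by (rule finite_subset)
qed

lemma up_sum:
  assumes "N \<le> K" "finite S"
  shows "(\<Sum>t\<in>S \<inter> L N. w t) = (\<Sum>t\<in>up N K S. w t)"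
proof -
  have img: "(\<lambda>t. pre t (dg N)) ` up N K S \<subseteq> S \<inter> L N"
  proof
    fix u assume "u \<in> (\<lambda>t. pre t (dg N)) ` up N K S"
    then obtain t where t: "t \<in> up N K S" "u = pre t (dg N)" by auto
    then have tP: "t \<in> P" "d t = dg K" "pre t (dg N) \<in> S" unfolding up_def L_def by auto
    have le: "dg N \<le> d t" using tP assms by (auto simp: le_fun_def)
    show "u \<in> S \<inter> L N" using fac_props(1,4)[OF tP(1) le] t tP unfolding L_def by auto
  qed
  have "(\<Sum>t\<in>up N K S. w t) = (\<Sum>u\<in>S \<inter> L N. \<Sum>t\<in>{t. t \<in> up N K S \<and> pre t (dg N) = u}. w t)"
    using sum.group[OF up_fin[OF assms] _ img, of w] assms(2) by simp
  also have "\<dots> = (\<Sum>u\<in>S \<inter> L N. w u)"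
  proof (rule sum.cong[OF refl])
    fix u assume u: "u \<in> S \<inter> L N"
    then have uP: "u \<in> P" "d u = dg N" unfolding L_def by auto
    have "{t. t \<in> up N K S \<and> pre t (dg N) = u} = {t\<in>P. d t = dg K \<and> pre t (d u) = u}"
      using u uP unfolding up_def L_def by auto
    then show "(\<Sum>t\<in>{t. t \<in> up N K S \<and> pre t (dg N) = u}. w t) = w u"
      using ext_sum[OF uP(1), of "dg K"] uP assms by (auto simp: le_fun_def)
  qed
  finally show ?thesis by simp
qed

lemma Cyl_inj:
  assumes "S \<subseteq> L K" "T \<subseteq> L K" "Cyl K S = Cyl K T" shows "S = T"
proof -
  have "t \<in> T" if "t \<in> S" "S \<subseteq> L K" "Cyl K S = Cyl K T" for S T t
  proof -
    have "t \<in> P" "d t = dg K" using that unfolding L_def by auto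
    then obtain x where "x \<in> \<Omega>" "x (dg 0, dg K) = t" using path_ext by blast
    then have "x \<in> Cyl K S" using that unfolding Cyl_def by auto
    then show ?thesis using that \<open>x (dg 0, dg K) = t\<close> unfolding Cyl_def by auto
  qed
  then show ?thesis using assms by blast
qed

lemma consistent:
  assumes "finite S" "finite T" "Cyl N S = Cyl M T"
  shows "(\<Sum>t\<in>S \<inter> L N. w t) = (\<Sum>t\<in>T \<inter> L M. w t)"
proof -
  define K where "K = max N M"
  have "up N K S = up M K T"
    using Cyl_inj[of "up N K S" K "up M K T"] Cyl_up[of N K S] Cyl_up[of M K T] assms(3)
    unfolding K_def up_def by auto
  then show ?thesis using up_sum[of N K S] up_sum[of M K T] assms unfolding K_def by simp
qed

definition val where
  "val A = (SOME v. \<exists>N S. finite S \<and> A = Cyl N S \<and> v = (\<Sum>t\<in>S \<inter> L N. w t))"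

lemma val_eq: assumes "finite S" shows "val (Cyl N S) = (\<Sum>t\<in>S \<inter> L N. w t)"
proof -
  have "\<exists>v. \<exists>N' S'. finite S' \<and> Cyl N S = Cyl N' S' \<and> v = (\<Sum>t\<in>S' \<inter> L N'. w t)"
    using assms by blast
  from someI_ex[OF this] obtain N' S' where
    "finite S'" "Cyl N S = Cyl N' S'" "val (Cyl N S) = (\<Sum>t\<in>S' \<inter> L N'. w t)"
    unfolding val_def by blast
  then show ?thesis using consistent[of S S' N N'] assms by simp
qed

lemma common:
  assumes "A \<in> Rg" "B \<in> Rg"
  shows "\<exists>K S T. finite S \<and> finite T \<and> S \<subseteq> L K \<and> T \<subseteq> L K \<and> A = Cyl K S \<and> B = Cyl K T"
proof -
  obtain N S M T where NS: "finite S" "A = Cyl N S" "finite T" "B = Cyl M T"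
    using assms unfolding Rg_def by blast
  define K where "K = max N M"
  have NK: "N \<le> K" "M \<le> K" unfolding K_def by auto
  have "finite (up N K S) \<and> finite (up M K T) \<and> up N K S \<subseteq> L K \<and> up M K T \<subseteq> L K
     \<and> A = Cyl K (up N K S) \<and> B = Cyl K (up M K T)"
    using NS Cyl_up[OF NK(1), of S] Cyl_up[OF NK(2), of T] up_fin[OF NK(1)] up_fin[OF NK(2)]
    by (auto simp: up_def)
  then show ?thesis by blast
qed

lemma Rg_ring: "ring_of_sets \<Omega> Rg"
proof (rule ring_of_setsI)
  show "Rg \<subseteq> Pow \<Omega>" unfolding Rg_def Cyl_def by auto
  show "{} \<in> Rg" unfolding Rg_def Cyl_def by (intro CollectI exI[of _ 0] exI[of _ "{}"]) auto
  fix a b assume ab: "a \<in> Rg" "b \<in> Rg"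
  from common[OF ab] obtain K S T where KST: "finite S" "finite T" "a = Cyl K S" "b = Cyl K T" by blast
  have "a \<union> b = Cyl K (S \<union> T)" "a - b = Cyl K (S - T)" using KST unfolding Cyl_def by auto
  then show "a \<union> b \<in> Rg" "a - b \<in> Rg" using KST unfolding Rg_def by auto
qed

definition f :: "_ set \<Rightarrow> ennreal" where "f A = ennreal (val A)"

lemma f_empty: "f {} = 0"
proof -
  have "{} = Cyl 0 {}" unfolding Cyl_def by auto
  then show ?thesis unfolding f_def using val_eq[of "{}" 0] by simp
qed

lemma f_pos: "positive Rg f"
  unfolding positive_def using f_empty by simp

lemma f_add: "additive Rg f"
  unfolding additive_def
proof (intro ballI impI)
  fix a b assume ab: "a \<in> Rg" "b \<in> Rg" and disj: "a \<inter> b = {}"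
  from common[OF ab] obtain K S T where KST: "finite S" "finite T" "S \<subseteq> L K" "T \<subseteq> L K"
    "a = Cyl K S" "b = Cyl K T" by blast
  have ST: "S \<inter> T = {}"
  proof (rule ccontr)
    assume "S \<inter> T \<noteq> {}"
    then obtain t where t: "t \<in> S" "t \<in> T" by blast
    then have "t \<in> P" "d t = dg K" using KST unfolding L_def by auto
    then obtain x where "x \<in> \<Omega>" "x (dg 0, dg K) = t" using path_ext by blast
    then have "x \<in> a \<inter> b" using KST t unfolding Cyl_def by auto
    then show False using disj by simp
  qed
  have ab2: "a \<union> b = Cyl K (S \<union> T)" using KST unfolding Cyl_def by auto
  have nn: "(\<Sum>t\<in>S. w t) \<ge> 0" "(\<Sum>t\<in>T. w t) \<ge> 0"
    using KST w_nonneg unfolding L_def by (auto intro!: sum_nonneg)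
  have "val (a \<union> b) = (\<Sum>t\<in>S. w t) + (\<Sum>t\<in>T. w t)"
    using ab2 val_eq[of "S \<union> T" K] KST ST by (simp add: Int_absorb2 sum.union_disjoint)
  moreover have "val a = (\<Sum>t\<in>S. w t)" "val b = (\<Sum>t\<in>T. w t)"
    using val_eq KST by (auto simp: Int_absorb2)
  ultimately show "f (a \<union> b) = f a + f b" unfolding f_def using nn by (simp add: ennreal_plus)
qed

end



lemma pigeon:
  assumes fin: "finite F" and ex: "\<And>i::nat. \<exists>a\<in>F. p i a"
    and dec: "\<And>i j a. i \<le> j \<Longrightarrow> p j a \<Longrightarrow> p i a"
  shows "\<exists>a\<in>F. \<forall>i. p i a"
proof (rule ccontr)
  assume "\<not> ?thesis"
  then have "\<forall>a\<in>F. \<exists>i. \<not> p i a" by blast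
  then obtain g where g: "\<And>a. a \<in> F \<Longrightarrow> \<not> p (g a) a" by metis
  define M where "M = Max (g ` F)"
  obtain a where a: "a \<in> F" "p M a" using ex by blast
  have "g a \<le> M" unfolding M_def using fin a(1) by simp
  then have "p (g a) a" using dec a(2) by blast
  then show False using g a(1) by blast
qed

context kgm begin

lemma koenig:
  assumes rg: "range A \<subseteq> Rg" and dA: "decseq A" and ne: "\<And>j. A j \<noteq> {}"
  shows "(\<Inter>i. A i) \<noteq> {}"
proof -
  have "\<forall>i. \<exists>N S. finite S \<and> A i = Cyl N S" using rg unfolding Rg_def by blast
  then obtain Nf Sf where NS: "\<And>i. finite (Sf i) \<and> A i = Cyl (Nf i) (Sf i)" by metis
  have AO: "A i \<subseteq> \<Omega>" for i using NS[of i] unfolding Cyl_def by auto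
  have sub: "i \<le> j \<Longrightarrow> A j \<subseteq> A i" for i j using dA unfolding decseq_def by blast
  define Q where "Q n t \<longleftrightarrow> (\<forall>i. \<exists>x\<in>A i. x (dg 0, dg n) = t)" for n t
  have Q0: "\<exists>v. Q 0 v"
  proof -
    have "\<exists>a\<in>r ` Sf 0. \<forall>i. \<exists>x\<in>A i. x (dg 0, dg 0) = a"
    proof (rule pigeon)
      show "finite (r ` Sf 0)" using NS by simp
    next
      fix i
      obtain x where x: "x \<in> A i" using ne[of i] by blast
      then have x0: "x \<in> A 0" "x \<in> \<Omega>" using sub[of 0 i] AO by auto
      then have "x (dg 0, dg (Nf 0)) \<in> Sf 0" using NS[of 0] unfolding Cyl_def by auto
      moreover have "r (x (dg 0, dg (Nf 0))) = x (dg 0, dg 0)"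
        using ip(3)[OF x0(2), of "dg 0" "dg (Nf 0)"] by (simp add: le_fun_def)
      ultimately have "x (dg 0, dg 0) \<in> r ` Sf 0" by (metis image_eqI)
      then show "\<exists>a\<in>r ` Sf 0. \<exists>x\<in>A i. x (dg 0, dg 0) = a" using x by blast
    next
      fix i j a assume "i \<le> j" "\<exists>x\<in>A j. x (dg 0, dg 0) = a"
      then show "\<exists>x\<in>A i. x (dg 0, dg 0) = a" using sub by blast
    qed
    then show ?thesis unfolding Q_def by blast
  qed
  have QS: "\<exists>t'. Q (Suc n) t' \<and> pre t' (dg n) = t" if Qt: "Q n t" for n t
  proof -
    obtain x0 where x0: "x0 \<in> A 0" "x0 (dg 0, dg n) = t" using Qt unfolding Q_def by blast
    have tP: "t \<in> P" using ip(1)[of x0 "dg 0" "dg n"] x0 AO by (auto simp: le_fun_def)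
    have "\<exists>a\<in>paths_from P r d (r t) (dg (Suc n)).
            \<forall>i. \<exists>x\<in>A i. x (dg 0, dg (Suc n)) = a \<and> x (dg 0, dg n) = t"
    proof (rule pigeon)
      show "finite (paths_from P r d (r t) (dg (Suc n)))" using pf_fin vert(1)[OF tP] by blast
    next
      fix i
      obtain x where x: "x \<in> A i" "x (dg 0, dg n) = t" using Qt unfolding Q_def by blast
      have xO: "x \<in> \<Omega>" using x AO by auto
      have "x (dg 0, dg (Suc n)) \<in> paths_from P r d (r t) (dg (Suc n))"
        using ip[OF xO, of "dg 0" "dg (Suc n)"] ip(3)[OF xO, of "dg 0" "dg n"] x(2)
        unfolding paths_from_def by (auto simp: le_fun_def)
      then show "\<exists>a\<in>paths_from P r d (r t) (dg (Suc n)).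
            \<exists>x\<in>A i. x (dg 0, dg (Suc n)) = a \<and> x (dg 0, dg n) = t" using x by blast
    next
      fix i j a assume "i \<le> j" "\<exists>x\<in>A j. x (dg 0, dg (Suc n)) = a \<and> x (dg 0, dg n) = t"
      then show "\<exists>x\<in>A i. x (dg 0, dg (Suc n)) = a \<and> x (dg 0, dg n) = t" using sub by blast
    qed
    then obtain a where a: "\<forall>i. \<exists>x\<in>A i. x (dg 0, dg (Suc n)) = a \<and> x (dg 0, dg n) = t" by blast
    have "Q (Suc n) a" using a unfolding Q_def by blast
    moreover have "pre a (dg n) = t"
    proof -
      obtain x where x: "x \<in> A 0" "x (dg 0, dg (Suc n)) = a" "x (dg 0, dg n) = t" using a by blast
      then show ?thesis using ip_pre(1)[of x "dg n" "dg (Suc n)"] AO by (auto simp: le_fun_def)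
    qed
    ultimately show ?thesis by blast
  qed
  define lam where "lam = rec_nat (SOME v. Q 0 v) (\<lambda>n t. SOME t'. Q (Suc n) t' \<and> pre t' (dg n) = t)"
  have lam0: "lam 0 = (SOME v. Q 0 v)" and lamS: "lam (Suc n) = (SOME t'. Q (Suc n) t' \<and> pre t' (dg n) = lam n)" for n
    unfolding lam_def by simp_all
  have Qlam: "Q n (lam n)" for n
  proof (induction n)
    case 0 then show ?case using someI_ex[OF Q0] lam0 by simp
  next
    case (Suc n) then show ?case using someI_ex[OF QS[OF Suc]] lamS[of n] by simp
  qed
  have coh: "pre (lam (Suc n)) (dg n) = lam n" for n
    using someI_ex[OF QS[OF Qlam[of n]]] lamS[of n] by simp
  have lamL: "lam n \<in> P \<and> d (lam n) = dg n" for n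
  proof -
    obtain x where "x \<in> A 0" "x (dg 0, dg n) = lam n" using Qlam[of n] unfolding Q_def by blast
    then show ?thesis using xL[of x n] AO unfolding L_def by auto
  qed
  obtain x where x: "x \<in> \<Omega>" "\<forall>n. x (dg 0, dg n) = lam n" using coherent_ext[OF lamL coh] by blast
  have "x \<in> A i" for i
  proof -
    obtain y where y: "y \<in> A i" "y (dg 0, dg (Nf i)) = lam (Nf i)" using Qlam[of "Nf i"] unfolding Q_def by blast
    then have "lam (Nf i) \<in> Sf i" using NS[of i] unfolding Cyl_def by auto
    then show ?thesis using NS[of i] x unfolding Cyl_def by auto
  qed
  then show ?thesis by blast
qed

lemma f_cont:
  assumes rg: "range A \<subseteq> Rg" and dA: "decseq A" and em: "(\<Inter>i. A i) = {}"
  shows "(\<lambda>i. f (A i)) \<longlonglongrightarrow> 0"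
proof -
  obtain j where j: "A j = {}" using koenig[OF rg dA] em by blast
  have "eventually (\<lambda>i. f (A i) = 0) sequentially"
  proof (rule eventually_sequentiallyI[of j])
    fix i assume "j \<le> i"
    then have "A i = {}" using dA j unfolding decseq_def by blast
    then show "f (A i) = 0" using f_empty by simp
  qed
  then show ?thesis by (rule tendsto_eventually)
qed

lemma cyl_Rg:
  assumes tP: "t \<in> P"
  shows "cylinder P r s cmp d t \<in> Rg" "f (cylinder P r s cmp d t) = ennreal (w t)"
proof -
  define K where "K = sum (d t) UNIV"
  have le: "d t \<le> dg K" unfolding K_def le_fun_def by (auto intro: member_le_sum)
  define S where "S = {u\<in>P. d u = dg K \<and> pre u (d t) = t}"
  have finS: "finite S"
  proof (rule finite_subset)
    show "S \<subseteq> paths_from P r d (r t) (dg K)"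
    proof
      fix u assume "u \<in> S"
      then have u: "u \<in> P" "d u = dg K" "pre u (d t) = t" unfolding S_def by auto
      then have "r u = r t" using r_pre(1)[of u "d t"] le by simp
      then show "u \<in> paths_from P r d (r t) (dg K)" using u unfolding paths_from_def by auto
    qed
    show "finite (paths_from P r d (r t) (dg K))" using pf_fin vert(1)[OF tP] by blast
  qed
  have eq: "cylinder P r s cmp d t = Cyl K S"
    unfolding cylinder_def Cyl_def S_def using xL[of _ K] ip_pre(1)[of _ "d t" "dg K"] le
    unfolding L_def by auto
  then show "cylinder P r s cmp d t \<in> Rg" using finS unfolding Rg_def by blast
  have "S \<inter> L K = S" unfolding S_def L_def by auto
  then have "val (cylinder P r s cmp d t) = (\<Sum>u\<in>S. w u)" using eq val_eq[OF finS] by simp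
  also have "\<dots> = w t" unfolding S_def using ext_sum[OF tP le] .
  finally show "f (cylinder P r s cmp d t) = ennreal (w t)" unfolding f_def by simp
qed

lemma sigma_eq: "sigma_sets \<Omega> Rg = borel_inf_paths P r s cmp d"
  unfolding borel_inf_paths_def
proof (rule equalityI)
  have cylO: "cylinder P r s cmp d ` P \<subseteq> Pow \<Omega>" unfolding cylinder_def by auto
  interpret sa: sigma_algebra \<Omega> "sigma_sets \<Omega> (cylinder P r s cmp d ` P)"
    by (rule sigma_algebra_sigma_sets[OF cylO])
  show "sigma_sets \<Omega> Rg \<subseteq> sigma_sets \<Omega> (cylinder P r s cmp d ` P)"
  proof (rule sigma_sets_mono, rule subsetI)
    fix A assume "A \<in> Rg"
    then obtain N S where NS: "finite S" "A = Cyl N S" unfolding Rg_def by blast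
    have "A = (\<Union>t\<in>S \<inter> L N. cylinder P r s cmp d t)"
      unfolding NS(2) Cyl_def cylinder_def L_def using xL[of _ N] unfolding L_def by auto
    moreover have "(\<Union>t\<in>S \<inter> L N. cylinder P r s cmp d t) \<in> sigma_sets \<Omega> (cylinder P r s cmp d ` P)"
      using NS(1) unfolding L_def by (intro sa.finite_UN) (auto intro: sigma_sets.Basic)
    ultimately show "A \<in> sigma_sets \<Omega> (cylinder P r s cmp d ` P)" by simp
  qed
  show "sigma_sets \<Omega> (cylinder P r s cmp d ` P) \<subseteq> sigma_sets \<Omega> Rg"
    using cyl_Rg(1) by (intro sigma_sets_mono') auto
qed

end



theorem theorem2p19:
  fixes P :: "'p set" and r s :: "'p \<Rightarrow> 'p" and cmp :: "'p \<Rightarrow> 'p \<Rightarrow> 'p"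
    and d :: "'p \<Rightarrow> ('k::finite \<Rightarrow> nat)"
    and \<xi> :: "'p \<Rightarrow> real" and \<beta> :: "'k \<Rightarrow> real"
  assumes "kgraph P r s cmp d"
    and "row_finite P r d"
    and "no_sources P r d"
    and "\<forall>v\<in>vertices P r. \<xi> v > 0"
    and "\<forall>i. \<forall>v\<in>vertices P r.
           (\<Sum>\<^sub>\<infinity>w\<in>vertices P r. real (adj P r s d i v w) * \<xi> w) = \<beta> i * \<xi> v"
  shows "\<exists>M. space M = inf_paths P r s cmp d \<and>
             sets M = borel_inf_paths P r s cmp d \<and>
             (\<forall>l\<in>P. emeasure M (cylinder P r s cmp d l)
                      = ennreal ((\<Prod>i\<in>UNIV. inverse (\<beta> i) ^ d l i) * \<xi> (s l)))"
proof -
  interpret K: kgm P r s cmp d \<xi> \<beta>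
    unfolding kgm_def kg_def kgm_axioms_def using assms by auto
  interpret R: ring_of_sets "inf_paths P r s cmp d" K.Rg by (rule K.Rg_ring)
  have fin: "\<And>A. A \<in> K.Rg \<Longrightarrow> K.f A \<noteq> \<infinity>" unfolding K.f_def by simp
  obtain \<mu> where mu: "\<forall>A\<in>K.Rg. \<mu> A = K.f A"
      "measure_space (inf_paths P r s cmp d) (sigma_sets (inf_paths P r s cmp d) K.Rg) \<mu>"
    using R.caratheodory_empty_continuous[OF K.f_pos K.f_add fin K.f_cont] by blast
  define M where "M = measure_of (inf_paths P r s cmp d) K.Rg \<mu>"
  have RgP: "K.Rg \<subseteq> Pow (inf_paths P r s cmp d)" by (rule R.space_closed)
  have "space M = inf_paths P r s cmp d" unfolding M_def by (rule space_measure_of_conv)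
  moreover have "sets M = borel_inf_paths P r s cmp d"
    unfolding M_def sets_measure_of_conv using RgP K.sigma_eq by simp
  moreover have "emeasure M (cylinder P r s cmp d l)
                      = ennreal ((\<Prod>i\<in>UNIV. inverse (\<beta> i) ^ d l i) * \<xi> (s l))" if lP: "l \<in> P" for l
  proof -
    have cR: "cylinder P r s cmp d l \<in> K.Rg" using K.cyl_Rg(1)[OF lP] .
    then have "cylinder P r s cmp d l \<in> sigma_sets (inf_paths P r s cmp d) K.Rg"
      by (rule sigma_sets.Basic)
    then have "emeasure M (cylinder P r s cmp d l) = \<mu> (cylinder P r s cmp d l)"
      unfolding M_def emeasure_measure_of_conv using mu(2) by simp
    also have "\<dots> = K.f (cylinder P r s cmp d l)" using mu(1) cR by simp
    also have "\<dots> = ennreal (K.w l)" using K.cyl_Rg(2)[OF lP] .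
    finally show ?thesis unfolding K.w_def .
  qed
  ultimately show ?thesis by blast
qed

end
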